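(* Let $H$ be a $\Lambda$-module, $k_1,k_2\ge1$ coprime integers, $z_1,z_2\in S^1$, and $\chi_i\colon H\to H/(t^{k_i}-1)\to S^1$ characters ($i=1,2$). Then $\alpha_{(k_1,z_1,\chi_1)}\otimes\alpha_{(k_2,z_2,\chi_2)}$ is conjugate to $\alpha_{(k_1k_2,\,z_1z_2,\,\chi_1\chi_2)}$, where $\chi_1\chi_2(h)=\chi_1(h)\chi_2(h)$ (a character factoring through $H/(t^{k_1k_2}-1)$). If moreover $\alpha_{(k_1,z_1,\chi_1)}$ and $\alpha_{(k_2,z_2,\chi_2)}$ are irreducible, then their tensor product is irreducible.
   Context: $\Lambda=\mathbb{Z}[t,t^{-1}]$; $\mathbb{Z}\ltimes H$ has multiplication $(n,h)(m,h')=(n+m,t^mh+h')$. For $k\ge1$, $z\in S^1$ and a character $\chi\colon H\to S^1$ factoring through $H/(t^k-1)H$, $\alpha_{(k,z,\chi)}\colon\mathbb{Z}\ltimes H\to U(k)$ is $\alpha_{(k,z,\chi)}(n,h)=z^nA_k^n\,\mathrm{diag}(\chi(h),\chi(th),\dots,\chi(t^{k-1}h))$, where $A_k$ is the $k\times k$ cyclic permutation matrix with $A_ke_i=e_{i+1}$ (indices mod $k$). *)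

theory Defs
  imports "Jordan_Normal_Form.Schur_Decomposition"
begin

(* A Lambda-module, Lambda = Z[t,t^-1]: an abelian group 'h with an additive
   automorphism t (the action of t). *)
definition lambda_module :: "('h::ab_group_add \<Rightarrow> 'h) \<Rightarrow> bool" where
  "lambda_module t \<longleftrightarrow> bij t \<and> (\<forall>a b. t (a + b) = t a + t b)"

(* chi : H -> S^1 is a character factoring through H/(t^k - 1)H *)
definition char_through :: "('h::ab_group_add \<Rightarrow> 'h) \<Rightarrow> nat \<Rightarrow> ('h \<Rightarrow> complex) \<Rightarrow> bool" where
  "char_through t k \<chi> \<longleftrightarrow>
     (\<forall>a b. \<chi> (a + b) = \<chi> a * \<chi> b) \<and> (\<forall>h. cmod (\<chi> h) = 1) \<and>
     (\<forall>h. \<chi> ((t ^^ k) h - h) = 1)"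

(* n-th power (n \<in> Z) of the k x k cyclic permutation matrix A_k with A_k e_i = e_{i+1}
   (indices mod k): A_k^n e_j = e_{(j+n) mod k}. *)
definition cyc_pow :: "nat \<Rightarrow> int \<Rightarrow> complex mat" where
  "cyc_pow k n = mat k k (\<lambda>(i, j). if int i = (int j + n) mod int k then 1 else 0)"

definition alpha :: "('h \<Rightarrow> 'h) \<Rightarrow> nat \<Rightarrow> complex \<Rightarrow> ('h \<Rightarrow> complex) \<Rightarrow> int \<times> 'h \<Rightarrow> complex mat" where
  "alpha t k z \<chi> g = (case g of (n, h) \<Rightarrow>
     (z powi n) \<cdot>\<^sub>m (cyc_pow k n * mat k k (\<lambda>(i, j). if i = j then \<chi> ((t ^^ i) h) else 0)))"

definition kron :: "complex mat \<Rightarrow> complex mat \<Rightarrow> complex mat" where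
  "kron A B = mat (dim_row A * dim_row B) (dim_col A * dim_col B)
     (\<lambda>(i, j). A $$ (i div dim_row B, j div dim_col B) * B $$ (i mod dim_row B, j mod dim_col B))"

definition unitary_mat :: "nat \<Rightarrow> complex mat \<Rightarrow> bool" where
  "unitary_mat n P \<longleftrightarrow> P \<in> carrier_mat n n \<and> mat_adjoint P * P = 1\<^sub>m n"

definition invariant_subspace :: "nat \<Rightarrow> ('g \<Rightarrow> complex mat) \<Rightarrow> complex vec set \<Rightarrow> bool" where
  "invariant_subspace n \<rho> W \<longleftrightarrow> W \<subseteq> carrier_vec n \<and> 0\<^sub>v n \<in> W \<and>
     (\<forall>v\<in>W. \<forall>w\<in>W. v + w \<in> W) \<and> (\<forall>c. \<forall>v\<in>W. c \<cdot>\<^sub>v v \<in> W) \<and>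
     (\<forall>g. \<forall>v\<in>W. \<rho> g *\<^sub>v v \<in> W)"

definition irreducible_rep :: "nat \<Rightarrow> ('g \<Rightarrow> complex mat) \<Rightarrow> bool" where
  "irreducible_rep n \<rho> \<longleftrightarrow> n > 0 \<and>
     (\<forall>W. invariant_subspace n \<rho> W \<longrightarrow> W = {0\<^sub>v n} \<or> W = carrier_vec n)"

end

theory Submission
  imports Defs
begin


lemma adj_dim[simp]: "dim_row (mat_adjoint A) = dim_col A" "dim_col (mat_adjoint A) = dim_row A"
  unfolding mat_adjoint_def by auto

lemma adj_index[simp]: "i < dim_col A \<Longrightarrow> j < dim_row A \<Longrightarrow> mat_adjoint A $$ (i,j) = conjugate (A $$ (j,i))"
  unfolding mat_adjoint_def by (auto simp: mat_of_rows_def)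

lemma alpha_dim[simp]: "dim_row (alpha t k z \<chi> g) = k" "dim_col (alpha t k z \<chi> g) = k"
  unfolding alpha_def cyc_pow_def by (auto split: prod.splits)

lemma alpha_index: "i<k \<Longrightarrow> j<k \<Longrightarrow> alpha t k z \<chi> (n,h) $$ (i,j) =
   z powi n * (if int i = (int j + n) mod int k then \<chi> ((t^^j) h) else 0)"
proof -
  assume i: "i<k" and j: "j<k"
  have "(\<Sum>l\<in>{0..<k}. (if int i = (int l + n) mod int k then 1 else 0) * (if l = j then \<chi> ((t^^l) h) else 0))
     = (\<Sum>l\<in>{0..<k}. if l = j then (if int i = (int l + n) mod int k then 1 else 0) * \<chi> ((t^^l) h) else 0)"
    by (rule sum.cong) auto
  also have "\<dots> = (if int i = (int j + n) mod int k then \<chi> ((t^^j) h) else 0)"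
    using j by (simp add: sum.delta)
  finally show ?thesis unfolding alpha_def cyc_pow_def using i j
    by (simp add: scalar_prod_def)
qed

lemma kron_dim[simp]: "dim_row (kron A B) = dim_row A * dim_row B" "dim_col (kron A B) = dim_col A * dim_col B"
  unfolding kron_def by auto

lemma kron_index: "i < dim_row A * dim_row B \<Longrightarrow> j < dim_col A * dim_col B \<Longrightarrow>
   kron A B $$ (i,j) = A $$ (i div dim_row B, j div dim_col B) * B $$ (i mod dim_row B, j mod dim_col B)"
  unfolding kron_def by auto

lemma tmod_add: "lambda_module t \<Longrightarrow> (t^^m) (a + b) = (t^^m) a + (t^^m) b"
  unfolding lambda_module_def by (induction m) auto

lemma tmod_zero: "lambda_module t \<Longrightarrow> (t^^m) 0 = 0"
  by (metis add_cancel_right_right tmod_add)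

lemma tmod_diff: "lambda_module t \<Longrightarrow> (t^^m) (a - b) = (t^^m) a - (t^^m) b"
  by (metis add_diff_cancel diff_add_cancel tmod_add)

lemma tmod_sum: "lambda_module t \<Longrightarrow> (t^^m) (sum f A) = (\<Sum>x\<in>A. (t^^m) (f x))"
  by (induction A rule: infinite_finite_induct) (auto simp: tmod_zero tmod_add)

lemma tmod_comm: "(t^^m) ((t^^n) x) = (t^^n) ((t^^m) x)"
  by (metis comp_apply funpow_add add.commute)

lemma ch_mult: "char_through t k \<chi> \<Longrightarrow> \<chi> (a + b) = \<chi> a * \<chi> b"
  unfolding char_through_def by auto

lemma ch_nz: "char_through t k \<chi> \<Longrightarrow> \<chi> a \<noteq> 0"
  unfolding char_through_def by (metis norm_zero zero_neq_one)

lemma ch_zero: "char_through t k \<chi> \<Longrightarrow> \<chi> 0 = 1"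
  by (metis ch_mult ch_nz add_0 mult_cancel_right1)

lemma ch_sum: "char_through t k \<chi> \<Longrightarrow> \<chi> (sum f A) = (\<Prod>x\<in>A. \<chi> (f x))"
  by (induction A rule: infinite_finite_induct) (auto simp: ch_zero ch_mult)

lemma ch_per1: "char_through t k \<chi> \<Longrightarrow> \<chi> ((t^^k) x) = \<chi> x"
proof -
  assume c: "char_through t k \<chi>"
  have "\<chi> ((t^^k) x) = \<chi> (((t^^k) x - x) + x)" by simp
  also have "\<dots> = \<chi> ((t^^k) x - x) * \<chi> x" using c by (rule ch_mult)
  also have "\<dots> = \<chi> x" using c unfolding char_through_def by auto
  finally show ?thesis .
qed

lemma ch_per_mult: "char_through t k \<chi> \<Longrightarrow> \<chi> ((t^^(q*k)) x) = \<chi> x"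
proof (induction q arbitrary: x)
  case (Suc q)
  have "(t^^(Suc q * k)) x = (t^^k) ((t^^(q*k)) x)" by (simp add: funpow_add)
  then show ?case using Suc ch_per1 by metis
qed simp

lemma ch_per: "char_through t k \<chi> \<Longrightarrow> \<chi> ((t^^(m mod k)) x) = \<chi> ((t^^m) x)"
proof -
  assume c: "char_through t k \<chi>"
  have "(t^^m) x = (t^^((m div k) * k)) ((t^^(m mod k)) x)"
    by (metis comp_apply funpow_add mult.commute div_mult_mod_eq)
  then show ?thesis using ch_per_mult[OF c] by metis
qed

lemma irred_crit:
  fixes \<rho> :: "'g \<Rightarrow> complex mat" and K :: nat and D :: "'x \<Rightarrow> 'g"
  assumes K: "K > 0"
    and carr: "\<And>g. \<rho> g \<in> carrier_mat K K"
    and diag: "\<And>x v. v \<in> carrier_vec K \<Longrightarrow> \<rho> (D x) *\<^sub>v v = vec K (\<lambda>i. d x i * v $ i)"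
    and sep: "\<And>i j. i < K \<Longrightarrow> j < K \<Longrightarrow> i \<noteq> j \<Longrightarrow> \<exists>x. d x i \<noteq> d x j"
    and trans: "\<And>i j. i < K \<Longrightarrow> j < K \<Longrightarrow> \<exists>g c. c \<noteq> 0 \<and> \<rho> g *\<^sub>v unit_vec K i = c \<cdot>\<^sub>v unit_vec K j"
  shows "irreducible_rep K \<rho>"
  unfolding irreducible_rep_def
proof (intro conjI allI impI K)
  fix W assume inv: "invariant_subspace K \<rho> W"
  have Wc: "W \<subseteq> carrier_vec K" and W0: "0\<^sub>v K \<in> W" and Wadd: "\<And>v w. v\<in>W \<Longrightarrow> w\<in>W \<Longrightarrow> v + w \<in> W"
    and Wsm: "\<And>c v. v\<in>W \<Longrightarrow> c \<cdot>\<^sub>v v \<in> W" and Wrho: "\<And>g v. v\<in>W \<Longrightarrow> \<rho> g *\<^sub>v v \<in> W"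
    using inv unfolding invariant_subspace_def by auto
  show "W = {0\<^sub>v K} \<or> W = carrier_vec K"
  proof (cases "W \<subseteq> {0\<^sub>v K}")
    case True then show ?thesis using W0 by auto
  next
    case False
    then obtain v where vW: "v \<in> W" and vnz: "v \<noteq> 0\<^sub>v K" by auto
    have vc: "v \<in> carrier_vec K" using vW Wc by auto
    obtain i where iK: "i < K" and vi: "v $ i \<noteq> 0"
      using vnz vc by (metis carrier_vecD eq_vecI index_zero_vec)
    have elim: "m \<le> K \<Longrightarrow> \<exists>w\<in>W. w $ i \<noteq> 0 \<and> (\<forall>j<m. j \<noteq> i \<longrightarrow> w $ j = 0)" for m
    proof (induction m)
      case 0 then show ?case using vW vi by auto
    next
      case (Suc m)
      then obtain w where wW: "w \<in> W" and wi: "w $ i \<noteq> 0" and wj: "\<forall>j<m. j \<noteq> i \<longrightarrow> w $ j = 0" by auto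
      have wc: "w \<in> carrier_vec K" using wW Wc by auto
      show ?case
      proof (cases "m = i")
        case True then show ?thesis using wW wi wj less_Suc_eq by auto
      next
        case False
        have mK: "m < K" using Suc by auto
        obtain x where dx: "d x i \<noteq> d x m" using sep[OF iK mK] False by metis
        define w' where "w' = \<rho> (D x) *\<^sub>v w + (- d x m) \<cdot>\<^sub>v w"
        have w'W: "w' \<in> W" unfolding w'_def using Wadd Wrho Wsm wW by blast
        have w'e: "l < K \<Longrightarrow> w' $ l = (d x l - d x m) * w $ l" for l
          unfolding w'_def diag[OF wc] using wc by (auto simp: algebra_simps)
        show ?thesis
        proof (intro bexI[OF _ w'W] conjI allI impI)
          show "w' $ i \<noteq> 0" using w'e[OF iK] wi dx by auto
        next
          fix j assume "j < Suc m" "j \<noteq> i"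
          then show "w' $ j = 0" using w'e[of j] wj mK by (cases "j = m") auto
        qed
      qed
    qed
    obtain w where wW: "w \<in> W" and wi: "w $ i \<noteq> 0" and wj: "\<forall>j<K. j \<noteq> i \<longrightarrow> w $ j = 0"
      using elim[of K] by auto
    have wc: "w \<in> carrier_vec K" using wW Wc by auto
    have "unit_vec K i = (1 / w $ i) \<cdot>\<^sub>v w"
      using wc wi wj iK by (intro eq_vecI) auto
    then have eiW: "unit_vec K i \<in> W" using Wsm wW by metis
    have ejW: "unit_vec K j \<in> W" if jK: "j < K" for j
    proof -
      obtain g c where c: "c \<noteq> 0" and gc: "\<rho> g *\<^sub>v unit_vec K i = c \<cdot>\<^sub>v unit_vec K j"
        using trans[OF iK jK] by metis
      have "unit_vec K j = (1/c) \<cdot>\<^sub>v (\<rho> g *\<^sub>v unit_vec K i)"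
        unfolding gc using c by (intro eq_vecI) auto
      then show ?thesis using Wsm Wrho eiW by metis
    qed
    have "carrier_vec K \<subseteq> W"
    proof
      fix u :: "complex vec" assume uc: "u \<in> carrier_vec K"
      have part: "m \<le> K \<Longrightarrow> vec K (\<lambda>j. if j < m then u $ j else 0) \<in> W" for m
      proof (induction m)
        case 0
        have "vec K (\<lambda>j. if j < 0 then u $ j else 0) = 0\<^sub>v K" by (intro eq_vecI) auto
        then show ?case using W0 by simp
      next
        case (Suc m)
        then have mK: "m < K" by auto
        have "vec K (\<lambda>j. if j < Suc m then u $ j else 0) =
              vec K (\<lambda>j. if j < m then u $ j else 0) + (u $ m) \<cdot>\<^sub>v unit_vec K m"
          using mK by (intro eq_vecI) (auto simp: less_Suc_eq)
        then show ?case using Suc mK Wadd Wsm ejW by auto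
      qed
      have "u = vec K (\<lambda>j. if j < K then u $ j else 0)" using uc by (intro eq_vecI) auto
      then show "u \<in> W" using part[of K] by simp
    qed
    then show ?thesis using Wc by auto
  qed
qed

lemma modeq_iff: "0 < k \<Longrightarrow> j < k \<Longrightarrow> (int i = (int j + n) mod int k) \<longleftrightarrow> (i < k \<and> j = nat ((int i - n) mod int k))"
  by (smt (verit, del_insts) add_implies_diff diff_add_cancel
    mod_add_left_eq mod_diff_left_eq nat_0_le nat_int nat_int_comparison(2)
    of_nat_0_le_iff zmod_trivial_iff)

lemma modeq_shift: "0 < k \<Longrightarrow> nat ((int ((l + a) mod k) - n) mod int k) = (nat ((int l - n) mod int k) + a) mod k"
proof -
  assume k: "0 < k"
  have 1: "int (nat ((int ((l + a) mod k) - n) mod int k)) = (int l + int a - n) mod int k"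
    using k by (simp add: of_nat_mod mod_diff_left_eq)
  have 2: "int ((nat ((int l - n) mod int k) + a) mod k) = (int l + int a - n) mod int k"
    using k by (simp add: of_nat_mod diff_add_eq mod_add_left_eq)
  show ?thesis using 1 2 by (metis nat_int)
qed

lemma alpha_mult_vec:
  assumes v: "v \<in> carrier_vec k" and l: "l < k"
  shows "(alpha t k z \<chi> (n,h) *\<^sub>v v) $ l =
    z powi n * \<chi> ((t^^(nat ((int l - n) mod int k))) h) * v $ (nat ((int l - n) mod int k))"
proof -
  define j0 where "j0 = nat ((int l - n) mod int k)"
  have k: "0 < k" using l by auto
  have j0k: "j0 < k" unfolding j0_def using k
    by (simp add: nat_less_iff)
  have "(alpha t k z \<chi> (n,h) *\<^sub>v v) $ l = (\<Sum>j\<in>{0..<k}. alpha t k z \<chi> (n,h) $$ (l,j) * v $ j)"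
    using v l by (simp add: scalar_prod_def)
  also have "\<dots> = (\<Sum>j\<in>{0..<k}. if j = j0 then z powi n * \<chi> ((t^^j) h) * v $ j else 0)"
    by (rule sum.cong) (auto simp: alpha_index l modeq_iff[OF k] j0_def)
  also have "\<dots> = z powi n * \<chi> ((t^^j0) h) * v $ j0" using j0k by (simp add: sum.delta)
  finally show ?thesis unfolding j0_def .
qed

lemma tpow_surj: "lambda_module t \<Longrightarrow> \<exists>x. y = (t^^i) x"
proof -
  assume "lambda_module t"
  then have "bij t" unfolding lambda_module_def by auto
  then have "bij (t^^i)" using bij_betw_funpow by blast
  then show ?thesis by (metis bij_pointE)
qed

lemma irred_distinct0:
  fixes t :: "'h::ab_group_add \<Rightarrow> 'h"
  assumes lm: "lambda_module t" and c: "char_through t k \<chi>"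
    and irr: "irreducible_rep k (alpha t k z \<chi>)"
    and ij: "i < j" and j: "j < k" and eq: "\<forall>h. \<chi> ((t^^i) h) = \<chi> ((t^^j) h)"
  shows False
proof -
  define a where "a = j - i"
  have k: "0 < k" using j by auto
  have a0: "0 < a" "a < k" using ij j unfolding a_def by auto
  have pa: "\<chi> ((t^^a) y) = \<chi> y" for y
  proof -
    obtain x where y: "y = (t^^i) x" using tpow_surj[OF lm] by blast
    have "(t^^a) y = (t^^j) x" unfolding y a_def using ij
      by (metis comp_apply funpow_add le_add_diff_inverse2 less_imp_le)
    then show ?thesis using eq y by metis
  qed
  define W :: "complex vec set" where "W = {v \<in> carrier_vec k. \<forall>l<k. v $ ((l + a) mod k) = v $ l}"
  have inv: "invariant_subspace k (alpha t k z \<chi>) W"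
    unfolding invariant_subspace_def
  proof (intro conjI ballI allI)
    show "W \<subseteq> carrier_vec k" unfolding W_def by auto
    show "0\<^sub>v k \<in> W" unfolding W_def using k by auto
  next
    fix v w assume "v \<in> W" "w \<in> W"
    then have vw: "v \<in> carrier_vec k" "w \<in> carrier_vec k" "\<forall>l<k. v $ ((l+a) mod k) = v $ l"
       "\<forall>l<k. w $ ((l+a) mod k) = w $ l" unfolding W_def by blast+
    have "\<forall>l<k. (v + w) $ ((l+a) mod k) = (v + w) $ l"
    proof (intro allI impI)
      fix l assume l: "l < k"
      have "(l+a) mod k < k" using k by simp
      then show "(v + w) $ ((l+a) mod k) = (v + w) $ l" using l vw by simp
    qed
    then show "v + w \<in> W" unfolding W_def using vw by simp
  next
    fix c v assume "v \<in> W"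
    then have vw: "v \<in> carrier_vec k" "\<forall>l<k. v $ ((l+a) mod k) = v $ l"
       unfolding W_def by blast+
    have "\<forall>l<k. (c \<cdot>\<^sub>v v) $ ((l+a) mod k) = (c \<cdot>\<^sub>v v) $ l"
    proof (intro allI impI)
      fix l assume l: "l < k"
      have "(l+a) mod k < k" using k by simp
      then show "(c \<cdot>\<^sub>v v) $ ((l+a) mod k) = (c \<cdot>\<^sub>v v) $ l" using l vw by simp
    qed
    then show "c \<cdot>\<^sub>v v \<in> W" unfolding W_def using vw by simp
  next
    fix g :: "int \<times> 'h" and v assume vW: "v \<in> W"
    obtain n h where g: "g = (n,h)" by (metis surj_pair)
    have vc: "v \<in> carrier_vec k" and vp: "\<And>l. l<k \<Longrightarrow> v $ ((l + a) mod k) = v $ l"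
      using vW unfolding W_def by blast+
    show "alpha t k z \<chi> g *\<^sub>v v \<in> W" unfolding W_def
    proof (intro CollectI conjI allI impI)
      show "alpha t k z \<chi> g *\<^sub>v v \<in> carrier_vec k" unfolding carrier_vec_def by simp
    next
      fix l assume l: "l < k"
      define j0 where "j0 = nat ((int l - n) mod int k)"
      have j0k: "j0 < k" unfolding j0_def using k by (simp add: nat_less_iff)
      have sh: "nat ((int ((l + a) mod k) - n) mod int k) = (j0 + a) mod k"
        unfolding j0_def using modeq_shift[OF k] by blast
      have "\<chi> ((t^^((j0 + a) mod k)) h) = \<chi> ((t^^(j0 + a)) h)" using ch_per[OF c] by blast
      also have "\<dots> = \<chi> ((t^^a) ((t^^j0) h))" by (simp add: funpow_add add.commute)
      also have "\<dots> = \<chi> ((t^^j0) h)" using pa by blast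
      finally have cc: "\<chi> ((t^^((j0 + a) mod k)) h) = \<chi> ((t^^j0) h)" .
      show "(alpha t k z \<chi> g *\<^sub>v v) $ ((l + a) mod k) = (alpha t k z \<chi> g *\<^sub>v v) $ l"
        unfolding g alpha_mult_vec[OF vc l] alpha_mult_vec[OF vc mod_less_divisor[OF k]]
        using sh cc vp[OF j0k] j0_def by simp
    qed
  qed
  have "W = {0\<^sub>v k} \<or> W = carrier_vec k" using irr inv unfolding irreducible_rep_def by auto
  moreover have "vec k (\<lambda>_. 1) \<in> W" unfolding W_def by auto
  moreover have "(vec k (\<lambda>_. 1) :: complex vec) \<noteq> 0\<^sub>v k"
  proof -
    have "(vec k (\<lambda>_. 1) :: complex vec) $ 0 \<noteq> (0\<^sub>v k :: complex vec) $ 0" using k by simp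
    then show ?thesis by metis
  qed
  moreover have "unit_vec k 0 \<notin> W"
  proof
    assume "unit_vec k 0 \<in> W"
    then have "unit_vec k 0 $ ((0 + a) mod k) = (unit_vec k 0 $ 0 :: complex)" unfolding W_def using k by blast
    then show False using a0 k by simp
  qed
  ultimately show False by auto
qed

lemma irred_distinct:
  assumes lm: "lambda_module t" and c: "char_through t k \<chi>"
    and irr: "irreducible_rep k (alpha t k z \<chi>)"
    and i: "i < k" and j: "j < k" and eq: "\<forall>h. \<chi> ((t^^i) h) = \<chi> ((t^^j) h)"
  shows "i = j"
  using irred_distinct0[OF lm c irr _ j eq] irred_distinct0[OF lm c irr _ i] eq
  by (metis linorder_neqE_nat)

lemma per_mult_gen: "(\<And>x. f ((t^^k) x) = f x) \<Longrightarrow> f ((t^^(q*k)) x) = f x"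
proof (induction q arbitrary: x)
  case (Suc q)
  have "(t^^(Suc q * k)) x = (t^^k) ((t^^(q*k)) x)" by (simp add: funpow_add)
  then show ?case using Suc by metis
qed simp

lemma norm_trick:
  fixes t :: "'h::ab_group_add \<Rightarrow> 'h"
  assumes lm: "lambda_module t" and c: "char_through t k \<chi>"
    and psi: "\<And>x. \<psi> x * \<chi> ((t^^i) x) = \<chi> ((t^^j) x)"
    and inv: "\<And>x. \<psi> (t x) = \<psi> x"
  shows "\<psi> x ^ k = 1"
proof -
  define N where "N y = (\<Sum>m<k. (t^^m) y)" for y
  have tN: "t (N y) = N (t y)" for y
  proof -
    have "t (N y) = (\<Sum>m<k. t ((t^^m) y))" using tmod_sum[OF lm, of 1 "\<lambda>m. (t^^m) y"] unfolding N_def by simp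
    also have "\<dots> = N (t y)" unfolding N_def by (simp only: funpow_swap1)
    finally show ?thesis .
  qed
  have Nt: "N (t y) = N y + ((t^^k) y - y)" for y
  proof -
    have "N (t y) = (\<Sum>m<k. (t^^(Suc m)) y)" unfolding N_def by (simp add: tmod_comm[where t=t and m=1, simplified])
    also have "\<dots> = N y + ((t^^k) y - y)" unfolding N_def
      using sum.lessThan_Suc_shift[of "\<lambda>m. (t^^m) y" k] sum.lessThan_Suc[of "\<lambda>m. (t^^m) y" k]
      by (simp add: algebra_simps)
    finally show ?thesis .
  qed
  have chN: "\<chi> (N (t y)) = \<chi> (N y)" for y
    unfolding Nt using c ch_mult[OF c] unfolding char_through_def by simp
  have chjN: "\<chi> ((t^^j') (N y)) = \<chi> (N y)" for j' y
  proof (induction j' arbitrary: y)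
    case (Suc j')
    have "(t^^Suc j') (N y) = (t^^j') (N (t y))" by (simp add: funpow_swap1 tN)
    then show ?case using Suc chN by metis
  qed simp
  have pm: "\<psi> ((t^^m) x) = \<psi> x" for m
    by (induction m) (auto simp: inv)
  have "(\<Prod>m<k. \<psi> ((t^^m) x) * \<chi> ((t^^i) ((t^^m) x))) = (\<Prod>m<k. \<chi> ((t^^j) ((t^^m) x)))"
    using psi by simp
  then have "\<psi> x ^ k * \<chi> ((t^^i) (N x)) = \<chi> ((t^^j) (N x))"
    unfolding N_def tmod_sum[OF lm] ch_sum[OF c] prod.distrib pm by simp
  then have "\<psi> x ^ k * \<chi> (N x) = \<chi> (N x)" using chjN by simp
  then show ?thesis using ch_nz[OF c] by simp
qed

lemma psi_trivial:
  fixes t :: "'h::ab_group_add \<Rightarrow> 'h"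
  assumes lm: "lambda_module t" and c1: "char_through t k1 \<chi>1" and c2: "char_through t k2 \<chi>2"
    and k1: "k1 \<ge> 1" and k2: "k2 \<ge> 1" and cop: "coprime k1 k2"
    and eq: "\<And>h. \<chi>1 ((t^^i1) h) * \<chi>2 ((t^^i2) h) = \<chi>1 ((t^^j1) h) * \<chi>2 ((t^^j2) h)"
  shows "\<chi>1 ((t^^i1) h) = \<chi>1 ((t^^j1) h)"
proof -
  define \<psi> where "\<psi> x = \<chi>1 ((t^^j1) x) / \<chi>1 ((t^^i1) x)" for x
  have p1: "\<psi> x * \<chi>1 ((t^^i1) x) = \<chi>1 ((t^^j1) x)" for x
    unfolding \<psi>_def using ch_nz[OF c1] by simp
  have p2: "\<psi> x * \<chi>2 ((t^^j2) x) = \<chi>2 ((t^^i2) x)" for x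
  proof -
    have "\<psi> x * \<chi>2 ((t^^j2) x) * \<chi>1 ((t^^i1) x) = \<chi>2 ((t^^i2) x) * \<chi>1 ((t^^i1) x)"
      using p1[of x] eq[of x] by (simp add: algebra_simps)
    then show ?thesis using ch_nz[OF c1] by simp
  qed
  have per1: "\<psi> ((t^^k1) x) = \<psi> x" for x
  proof -
    have "\<psi> ((t^^k1) x) * \<chi>1 ((t^^i1) x) = \<chi>1 ((t^^j1) x)"
      using p1[of "(t^^k1) x"] ch_per1[OF c1] tmod_comm by metis
    then show ?thesis using p1[of x] ch_nz[OF c1] by (metis mult_right_cancel)
  qed
  have per2: "\<psi> ((t^^k2) x) = \<psi> x" for x
  proof -
    have "\<psi> ((t^^k2) x) * \<chi>2 ((t^^j2) x) = \<chi>2 ((t^^i2) x)"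
      using p2[of "(t^^k2) x"] ch_per1[OF c2] tmod_comm by metis
    then show ?thesis using p2[of x] ch_nz[OF c2] by (metis mult_right_cancel)
  qed
  obtain u v where uv: "k1 * u = k2 * v + 1"
    using bezout_nat[of k1 k2] k1 cop by auto
  have inv: "\<psi> (t y) = \<psi> y" for y
  proof -
    have "(t^^(u * k1)) y = (t^^(v * k2)) (t y)" using uv
      by (simp add: mult.commute funpow_add funpow_swap1)
    then show ?thesis using per_mult_gen[where f=\<psi> and t=t and k=k1 and q=u, OF per1] per_mult_gen[where f=\<psi> and t=t and k=k2 and q=v, OF per2] by metis
  qed
  have e1: "\<psi> x ^ k1 = 1" for x by (rule norm_trick[OF lm c1 p1 inv])
  have e2: "\<psi> x ^ k2 = 1" for x by (rule norm_trick[OF lm c2 p2 inv])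
  have "\<psi> h = \<psi> h ^ (k1 * u)" using e2[of h] uv
    by (metis power_add power_mult power_one power_one_right mult_1)
  also have "\<dots> = 1" using e1 by (simp add: power_mult)
  finally show ?thesis using p1[of h] by simp
qed

lemma crt_eq:
  fixes k1 k2 m m' :: nat
  assumes cop: "coprime k1 k2" and m: "m < k1 * k2" and m': "m' < k1 * k2"
    and e1: "m mod k1 = m' mod k1" and e2: "m mod k2 = m' mod k2"
  shows "m = m'"
proof -
  have "int k1 dvd int m - int m'" using e1 by (metis mod_eq_dvd_iff of_nat_mod)
  moreover have "int k2 dvd int m - int m'" using e2 by (metis mod_eq_dvd_iff of_nat_mod)
  ultimately have "int (k1 * k2) dvd int m - int m'" using cop divides_mult[where a="int k1" and b="int k2" and c="int m - int m'"] by simp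
  then show ?thesis using m m'
    by (metis mod_eq_dvd_iff mod_less of_nat_eq_iff of_nat_mod)
qed

lemma modc_iff: "a < k \<Longrightarrow> (int a = x mod int k) \<longleftrightarrow> int k dvd (int a - x)"
  by (metis mod_eq_dvd_iff mod_less of_nat_mod)

lemma modc_cong: "int k dvd (int (m mod k) - (int (m' mod k) + n)) \<longleftrightarrow> int k dvd (int m - int m' - n)"
proof -
  have a: "int m = int k * int (m div k) + int (m mod k)" for m
    by (metis div_mult_mod_eq mult.commute of_nat_add of_nat_mult)
  have "int m - int m' - n = (int (m mod k) - (int (m' mod k) + n)) + int k * (int (m div k) - int (m' div k))"
    using a[of m] a[of m'] by (simp add: algebra_simps)
  then show ?thesis by (metis dvd_add_left_iff dvd_triv_left)
qed

lemma sig_div: "0 < k2 \<Longrightarrow> ((a::nat) * k2 + m mod k2) div k2 = a"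
  by simp

lemma sig_lt: "0 < k2 \<Longrightarrow> (m::nat) mod k1 < k1 \<Longrightarrow> (m mod k1) * k2 + m mod k2 < k1 * k2"
  by (metis add.comm_neutral add.commute div_less_iff_less_mult
    div_mult_self2 gr0_conv_Suc mod_div_trivial mult.commute
    nat.simps(3))

lemma kron_alpha_index:
  assumes k2: "0 < k2" and i: "i < k1*k2" and j: "j < k1*k2"
  shows "kron (alpha t k1 z1 \<chi>1 (n,h)) (alpha t k2 z2 \<chi>2 (n,h)) $$ (i,j) =
     (z1 powi n * (if int (i div k2) = (int (j div k2) + n) mod int k1 then \<chi>1 ((t^^(j div k2)) h) else 0)) *
     (z2 powi n * (if int (i mod k2) = (int (j mod k2) + n) mod int k2 then \<chi>2 ((t^^(j mod k2)) h) else 0))"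
proof -
  have "i div k2 < k1" "j div k2 < k1" using i j by (simp_all add: less_mult_imp_div_less)
  moreover have "i mod k2 < k2" "j mod k2 < k2" using k2 by simp_all
  ultimately show ?thesis using i j by (simp add: kron_index alpha_index)
qed

lemma col_unit:
  fixes M :: "complex mat"
  assumes M: "M \<in> carrier_mat K K" and i: "i < K" and j: "j < K"
    and e: "\<And>l. l < K \<Longrightarrow> M $$ (l,i) = (if l = j then c else 0)"
  shows "M *\<^sub>v unit_vec K i = c \<cdot>\<^sub>v unit_vec K j"
proof (rule eq_vecI)
  show "dim_vec (M *\<^sub>v unit_vec K i) = dim_vec (c \<cdot>\<^sub>v unit_vec K j)" using M by simp
  fix l assume "l < dim_vec (c \<cdot>\<^sub>v unit_vec K j)"
  then have l: "l < K" by simp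
  have "(M *\<^sub>v unit_vec K i) $ l = (\<Sum>m\<in>{0..<K}. M $$ (l,m) * unit_vec K i $ m)"
    using M l by (simp add: scalar_prod_def)
  also have "\<dots> = (\<Sum>m\<in>{0..<K}. if m = i then M $$ (l,m) else 0)"
    by (rule sum.cong) (auto simp: i)
  also have "\<dots> = M $$ (l,i)" using i by simp
  finally show "(M *\<^sub>v unit_vec K i) $ l = (c \<cdot>\<^sub>v unit_vec K j) $ l" using e[OF l] l j by simp
qed

lemma diag_mult:
  assumes M: "M \<in> carrier_mat K K" and v: "v \<in> carrier_vec K"
    and e: "\<And>l j. l < K \<Longrightarrow> j < K \<Longrightarrow> M $$ (l,j) = (if l = j then f l else 0)"
  shows "M *\<^sub>v v = vec K (\<lambda>l. f l * v $ l)"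
proof (rule eq_vecI)
  show "dim_vec (M *\<^sub>v v) = dim_vec (vec K (\<lambda>l. f l * v $ l))" using M by simp
  fix l assume "l < dim_vec (vec K (\<lambda>l. f l * v $ l))"
  then have l: "l < K" by simp
  have "(M *\<^sub>v v) $ l = (\<Sum>m\<in>{0..<K}. M $$ (l,m) * v $ m)"
    using M l v by (simp add: scalar_prod_def)
  also have "\<dots> = (\<Sum>m\<in>{0..<K}. if m = l then f l * v $ m else 0)"
    by (rule sum.cong) (auto simp: e l)
  also have "\<dots> = f l * v $ l" using l by simp
  finally show "(M *\<^sub>v v) $ l = vec K (\<lambda>l. f l * v $ l) $ l" using l by simp
qed

lemma divmod_eq: "(a::nat) div k = b div k \<Longrightarrow> a mod k = b mod k \<Longrightarrow> a = b"
  by (metis div_mult_mod_eq)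

lemma kron_alpha_carrier: "kron (alpha t k1 z1 \<chi>1 g) (alpha t' k2 z2 \<chi>2 g') \<in> carrier_mat (k1*k2) (k1*k2)"
  by (rule carrier_matI) simp_all

lemma part2:
  fixes t :: "'h::ab_group_add \<Rightarrow> 'h"
  assumes lm: "lambda_module t" and k1: "k1 \<ge> 1" and k2: "k2 \<ge> 1" and cop: "coprime k1 k2"
    and z1: "cmod z1 = 1" and z2: "cmod z2 = 1"
    and c1: "char_through t k1 \<chi>1" and c2: "char_through t k2 \<chi>2"
    and irr1: "irreducible_rep k1 (alpha t k1 z1 \<chi>1)" and irr2: "irreducible_rep k2 (alpha t k2 z2 \<chi>2)"
  shows "irreducible_rep (k1 * k2) (\<lambda>g. kron (alpha t k1 z1 \<chi>1 g) (alpha t k2 z2 \<chi>2 g))"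
proof (rule irred_crit[where D = "\<lambda>x. (0::int, x)" and d = "\<lambda>x i. \<chi>1 ((t^^(i div k2)) x) * \<chi>2 ((t^^(i mod k2)) x)"])
  let ?K = "k1 * k2"
  have k2p: "0 < k2" using k2 by simp
  show "0 < ?K" using k1 k2 by simp
  show "\<And>g. kron (alpha t k1 z1 \<chi>1 g) (alpha t k2 z2 \<chi>2 g) \<in> carrier_mat ?K ?K"
    by (rule kron_alpha_carrier)
  have dk: "a div k2 < k1" if "a < ?K" for a using that by (simp add: less_mult_imp_div_less)
  have mk: "a mod k2 < k2" for a using k2p by simp
  show "kron (alpha t k1 z1 \<chi>1 (0, x)) (alpha t k2 z2 \<chi>2 (0, x)) *\<^sub>v v =
        vec ?K (\<lambda>i. \<chi>1 ((t^^(i div k2)) x) * \<chi>2 ((t^^(i mod k2)) x) * v $ i)"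
    if v: "v \<in> carrier_vec ?K" for x v
  proof (rule diag_mult[OF _ v])
    show "kron (alpha t k1 z1 \<chi>1 (0, x)) (alpha t k2 z2 \<chi>2 (0, x)) \<in> carrier_mat ?K ?K"
      by (rule kron_alpha_carrier)
    fix l j assume l: "l < ?K" and j: "j < ?K"
    have e1: "(int (l div k2) = (int (j div k2) + 0) mod int k1) = (l div k2 = j div k2)"
      using dk[OF j] by simp
    have e2: "(int (l mod k2) = (int (j mod k2) + 0) mod int k2) = (l mod k2 = j mod k2)"
      using mk[of j] by simp
    show "kron (alpha t k1 z1 \<chi>1 (0, x)) (alpha t k2 z2 \<chi>2 (0, x)) $$ (l, j) =
          (if l = j then \<chi>1 ((t^^(l div k2)) x) * \<chi>2 ((t^^(l mod k2)) x) else 0)"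
      unfolding kron_alpha_index[OF k2p l j] e1 e2 using divmod_eq[of l k2 j] by auto
  qed
  show "\<exists>x. \<chi>1 ((t^^(i div k2)) x) * \<chi>2 ((t^^(i mod k2)) x) \<noteq> \<chi>1 ((t^^(j div k2)) x) * \<chi>2 ((t^^(j mod k2)) x)"
    if i: "i < ?K" and j: "j < ?K" and ij: "i \<noteq> j" for i j
  proof (rule ccontr)
    assume "\<not> ?thesis"
    then have eq: "\<And>x. \<chi>1 ((t^^(i div k2)) x) * \<chi>2 ((t^^(i mod k2)) x) = \<chi>1 ((t^^(j div k2)) x) * \<chi>2 ((t^^(j mod k2)) x)"
      by auto
    have q1: "\<chi>1 ((t^^(i div k2)) x) = \<chi>1 ((t^^(j div k2)) x)" for x
      by (rule psi_trivial[OF lm c1 c2 k1 k2 cop eq])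
    have d1: "i div k2 = j div k2"
      using irred_distinct[OF lm c1 irr1 dk[OF i] dk[OF j]] q1 by blast
    have q2: "\<chi>2 ((t^^(i mod k2)) x) = \<chi>2 ((t^^(j mod k2)) x)" for x
      using eq[of x] q1[of x] ch_nz[OF c1] by (metis mult_left_cancel)
    have d2: "i mod k2 = j mod k2"
      using irred_distinct[OF lm c2 irr2 mk mk] q2 by blast
    show False using divmod_eq[OF d1 d2] ij by simp
  qed
  show "\<exists>g c. c \<noteq> 0 \<and> kron (alpha t k1 z1 \<chi>1 g) (alpha t k2 z2 \<chi>2 g) *\<^sub>v unit_vec ?K i = c \<cdot>\<^sub>v unit_vec ?K j"
    if i: "i < ?K" and j: "j < ?K" for i j
  proof -
    obtain u v where uv: "u * int k1 + v * int k2 = 1"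
      using bezout_int[of "int k1" "int k2"] cop by auto
    define i1 where "i1 = int (i div k2)"
    define i2 where "i2 = int (i mod k2)"
    define j1 where "j1 = int (j div k2)"
    define j2 where "j2 = int (j mod k2)"
    define n where "n = (j1 - i1) * v * int k2 + (j2 - i2) * u * int k1"
    have n1: "i1 + n = j1 + int k1 * ((j2 - i2) * u - (j1 - i1) * u)"
    proof -
      have "i1 + n - (j1 + int k1 * ((j2 - i2) * u - (j1 - i1) * u)) = (j1 - i1) * (u * int k1 + v * int k2 - 1)"
        unfolding n_def by (simp add: algebra_simps)
      then show ?thesis using uv by simp
    qed
    have n2: "i2 + n = j2 + int k2 * ((j1 - i1) * v - (j2 - i2) * v)"
    proof -
      have "i2 + n - (j2 + int k2 * ((j1 - i1) * v - (j2 - i2) * v)) = (j2 - i2) * (u * int k1 + v * int k2 - 1)"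
        unfolding n_def by (simp add: algebra_simps)
      then show ?thesis using uv by simp
    qed
    have m1: "(i1 + n) mod int k1 = j1" unfolding n1 j1_def using dk[OF j] by simp
    have m2: "(i2 + n) mod int k2 = j2" unfolding n2 j2_def using mk[of j] by simp
    have z1n: "z1 \<noteq> 0" using z1 by auto
    have z2n: "z2 \<noteq> 0" using z2 by auto
    define c where "c = z1 powi n * z2 powi n"
    have cnz: "c \<noteq> 0" unfolding c_def using z1n z2n by simp
    have t0: "(t^^m) 0 = 0" for m using tmod_zero[OF lm] .
    have col: "kron (alpha t k1 z1 \<chi>1 (n,0)) (alpha t k2 z2 \<chi>2 (n,0)) *\<^sub>v unit_vec ?K i = c \<cdot>\<^sub>v unit_vec ?K j"
    proof (rule col_unit[OF _ i j])
      show "kron (alpha t k1 z1 \<chi>1 (n,0)) (alpha t k2 z2 \<chi>2 (n,0)) \<in> carrier_mat ?K ?K"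
        by (rule kron_alpha_carrier)
      fix l assume l: "l < ?K"
      have e1: "(int (l div k2) = (int (i div k2) + n) mod int k1) = (l div k2 = j div k2)"
        using m1 unfolding i1_def j1_def by auto
      have e2: "(int (l mod k2) = (int (i mod k2) + n) mod int k2) = (l mod k2 = j mod k2)"
        using m2 unfolding i2_def j2_def by auto
      show "kron (alpha t k1 z1 \<chi>1 (n,0)) (alpha t k2 z2 \<chi>2 (n,0)) $$ (l, i) = (if l = j then c else 0)"
        unfolding kron_alpha_index[OF k2p l i] e1 e2 c_def t0 ch_zero[OF c1] ch_zero[OF c2]
        using divmod_eq[of l k2 j] by auto
    qed
    then show ?thesis using cnz by blast
  qed
qed

lemma part1:
  fixes t :: "'h::ab_group_add \<Rightarrow> 'h"
  assumes k1: "k1 \<ge> 1" and k2: "k2 \<ge> 1" and cop: "coprime k1 k2"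
    and c1: "char_through t k1 \<chi>1" and c2: "char_through t k2 \<chi>2"
  shows "\<exists>P. unitary_mat (k1 * k2) P \<and>
            (\<forall>g. P * kron (alpha t k1 z1 \<chi>1 g) (alpha t k2 z2 \<chi>2 g) * mat_adjoint P
                 = alpha t (k1 * k2) (z1 * z2) (\<lambda>h. \<chi>1 h * \<chi>2 h) g)"
proof -
  let ?K = "k1 * k2"
  have k2p: "0 < k2" using k2 by simp
  have Kp: "0 < ?K" using k1 k2 by simp
  define \<sigma> where "\<sigma> m = (m mod k1) * k2 + m mod k2" for m
  define P :: "complex mat" where "P = mat ?K ?K (\<lambda>(m,a). if a = \<sigma> m then 1 else 0)"
  have sK: "\<sigma> m < ?K" for m unfolding \<sigma>_def using k1 k2p by (intro sig_lt) auto
  have sdiv: "\<sigma> m div k2 = m mod k1" for m unfolding \<sigma>_def using k2p by (rule sig_div)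
  have smod: "\<sigma> m mod k2 = m mod k2" for m unfolding \<sigma>_def by simp
  have inj: "inj_on \<sigma> {0..<?K}"
  proof (rule inj_onI)
    fix m m' assume m: "m \<in> {0..<?K}" and m': "m' \<in> {0..<?K}" and e: "\<sigma> m = \<sigma> m'"
    show "m = m'"
      using crt_eq[OF cop, of m m'] m m' sdiv[of m] sdiv[of m'] smod[of m] smod[of m'] e by auto
  qed
  have bij: "bij_betw \<sigma> {0..<?K} {0..<?K}"
  proof -
    have "\<sigma> ` {0..<?K} \<subseteq> {0..<?K}" using sK by auto
    then have "\<sigma> ` {0..<?K} = {0..<?K}" using inj endo_inj_surj[of "{0..<?K}" \<sigma>] by blast
    then show ?thesis unfolding bij_betw_def using inj by blast
  qed
  have Pc: "P \<in> carrier_mat ?K ?K" unfolding P_def by simp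
  have Pe: "P $$ (m,a) = (if a = \<sigma> m then 1 else 0)" if "m < ?K" "a < ?K" for m a
    unfolding P_def using that by simp
  have unit: "mat_adjoint P * P = 1\<^sub>m ?K"
  proof (rule eq_matI)
    fix a b assume a: "a < dim_row (1\<^sub>m ?K :: complex mat)" and b: "b < dim_col (1\<^sub>m ?K :: complex mat)"
    then have a: "a < ?K" and b: "b < ?K" by auto
    have "(mat_adjoint P * P) $$ (a,b) = (\<Sum>m\<in>{0..<?K}. mat_adjoint P $$ (a,m) * P $$ (m,b))"
      using a b Pc by (simp add: scalar_prod_def)
    also have "\<dots> = (\<Sum>m\<in>{0..<?K}. (\<lambda>c. (if a = c then 1 else 0) * (if b = c then 1 else 0)) (\<sigma> m))"
      by (rule sum.cong) (use a b Pc Pe in auto)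
    also have "\<dots> = (\<Sum>c\<in>{0..<?K}. (if a = c then 1 else 0) * (if b = c then 1 else 0))"
      by (rule sum.reindex_bij_betw[OF bij])
    also have "\<dots> = (\<Sum>c\<in>{0..<?K}. if c = a then (if b = c then 1 else 0) else 0)"
      by (rule sum.cong) auto
    also have "\<dots> = (1\<^sub>m ?K :: complex mat) $$ (a,b)" using a b by simp
    finally show "(mat_adjoint P * P) $$ (a,b) = (1\<^sub>m ?K :: complex mat) $$ (a,b)" .
  qed (use Pc in auto)
  have conj: "(P * X * mat_adjoint P) $$ (m,m') = X $$ (\<sigma> m, \<sigma> m')"
    if X: "X \<in> carrier_mat ?K ?K" and m: "m < ?K" and m': "m' < ?K" for X m m'
  proof -
    have PX: "(P * X) $$ (m,b) = X $$ (\<sigma> m, b)" if b: "b < ?K" for b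
    proof -
      have "(P * X) $$ (m,b) = (\<Sum>a\<in>{0..<?K}. P $$ (m,a) * X $$ (a,b))"
        using m b Pc X by (simp add: scalar_prod_def)
      also have "\<dots> = (\<Sum>a\<in>{0..<?K}. if a = \<sigma> m then X $$ (a,b) else 0)"
        by (rule sum.cong) (use m Pe in auto)
      also have "\<dots> = X $$ (\<sigma> m, b)" using sK by simp
      finally show ?thesis .
    qed
    have "(P * X * mat_adjoint P) $$ (m,m') = (\<Sum>b\<in>{0..<?K}. (P * X) $$ (m,b) * mat_adjoint P $$ (b,m'))"
      using m m' Pc X by (simp add: scalar_prod_def)
    also have "\<dots> = (\<Sum>b\<in>{0..<?K}. if b = \<sigma> m' then X $$ (\<sigma> m, b) else 0)"
      by (rule sum.cong) (use m' Pe Pc PX in auto)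
    also have "\<dots> = X $$ (\<sigma> m, \<sigma> m')" using sK by simp
    finally show ?thesis .
  qed
  have main: "P * kron (alpha t k1 z1 \<chi>1 (n,h)) (alpha t k2 z2 \<chi>2 (n,h)) * mat_adjoint P
                 = alpha t ?K (z1 * z2) (\<lambda>h. \<chi>1 h * \<chi>2 h) (n,h)" for n h
  proof (rule eq_matI)
    fix m m' assume m: "m < dim_row (alpha t ?K (z1 * z2) (\<lambda>h. \<chi>1 h * \<chi>2 h) (n,h))"
      and m': "m' < dim_col (alpha t ?K (z1 * z2) (\<lambda>h. \<chi>1 h * \<chi>2 h) (n,h))"
    then have m: "m < ?K" and m': "m' < ?K" by auto
    have C1: "(int (m mod k1) = (int (m' mod k1) + n) mod int k1) \<longleftrightarrow> int k1 dvd (int m - int m' - n)"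
      using modc_iff[of "m mod k1" k1] modc_cong[of k1 m m' n] k1 by simp
    have C2: "(int (m mod k2) = (int (m' mod k2) + n) mod int k2) \<longleftrightarrow> int k2 dvd (int m - int m' - n)"
      using modc_iff[of "m mod k2" k2] modc_cong[of k2 m m' n] k2 by simp
    have CK: "(int m = (int m' + n) mod int ?K) \<longleftrightarrow> int ?K dvd (int m - int m' - n)"
      using modc_iff[OF m, of "int m' + n"] by (simp add: algebra_simps)
    have Cdvd: "int ?K dvd d \<longleftrightarrow> int k1 dvd d \<and> int k2 dvd d" for d
      using cop divides_mult[where a="int k1" and b="int k2" and c=d]
      by (auto intro: dvd_mult_left dvd_mult_right)
    have X: "kron (alpha t k1 z1 \<chi>1 (n,h)) (alpha t k2 z2 \<chi>2 (n,h)) \<in> carrier_mat ?K ?K"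
      by (rule kron_alpha_carrier)
    show "(P * kron (alpha t k1 z1 \<chi>1 (n,h)) (alpha t k2 z2 \<chi>2 (n,h)) * mat_adjoint P) $$ (m,m')
        = alpha t ?K (z1 * z2) (\<lambda>h. \<chi>1 h * \<chi>2 h) (n,h) $$ (m,m')"
      unfolding conj[OF X m m'] kron_alpha_index[OF k2p sK sK] alpha_index[OF m m'] sdiv smod
        C1 C2 CK Cdvd ch_per[OF c1] ch_per[OF c2] power_int_mult_distrib
      by simp
  qed (use Pc in auto)
  show ?thesis
  proof (intro exI conjI allI)
    show "unitary_mat ?K P" unfolding unitary_mat_def using Pc unit by simp
    fix g :: "int \<times> 'h"
    obtain n h where g: "g = (n,h)" by (metis surj_pair)
    show "P * kron (alpha t k1 z1 \<chi>1 g) (alpha t k2 z2 \<chi>2 g) * mat_adjoint P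
                 = alpha t ?K (z1 * z2) (\<lambda>h. \<chi>1 h * \<chi>2 h) g" unfolding g by (rule main)
  qed
qed


theorem proposition4p7:
  fixes t :: "'h::ab_group_add \<Rightarrow> 'h" and k1 k2 :: nat and z1 z2 :: complex
    and \<chi>1 \<chi>2 :: "'h \<Rightarrow> complex"
  assumes "lambda_module t" and "k1 \<ge> 1" and "k2 \<ge> 1" and "coprime k1 k2"
    and "cmod z1 = 1" and "cmod z2 = 1"
    and "char_through t k1 \<chi>1" and "char_through t k2 \<chi>2"
  shows "(\<exists>P. unitary_mat (k1 * k2) P \<and>
            (\<forall>g. P * kron (alpha t k1 z1 \<chi>1 g) (alpha t k2 z2 \<chi>2 g) * mat_adjoint P
                 = alpha t (k1 * k2) (z1 * z2) (\<lambda>h. \<chi>1 h * \<chi>2 h) g))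
       \<and> (irreducible_rep k1 (alpha t k1 z1 \<chi>1) \<and> irreducible_rep k2 (alpha t k2 z2 \<chi>2)
          \<longrightarrow> irreducible_rep (k1 * k2) (\<lambda>g. kron (alpha t k1 z1 \<chi>1 g) (alpha t k2 z2 \<chi>2 g)))"
    using part1[OF assms(2,3,4,7,8)] part2[OF assms(1-8)] by blast

end
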